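(* Let $n$ be an odd prime and let $x,y,z$ be positive integers with $\gcd(x,y,z)=1$ satisfying $x^n + y^n = z^n$. Then: (i) every odd prime $p \mid x$ satisfies $\nu_p(z^{p-1} - y^{p-1}) \geq n - 1$; every odd prime $p \mid y$ satisfies $\nu_p(z^{p-1} - x^{p-1}) \geq n - 1$; every odd prime $p \mid z$ satisfies $\nu_p(x^{p-1} - y^{p-1}) \geq n - 1$; (ii) if moreover $n \nmid xyz$, then the lower bounds $n-1$ in (i) can be replaced by $n$; (iii) if $2 \mid z$ then $\nu_2(x + y) \geq n$; if $2 \mid x$ then $\nu_2(z - y) \geq n$; if $2 \mid y$ then $\nu_2(z - x) \geq n$; (iv) if a prime $p$ divides both $x$ and $z - y$, then $\nu_p(z - y) \geq n - 1$; if a prime $p$ divides both $y$ and $z - x$, then $\nu_p(z - x) \geq n - 1$; if a prime $p$ divides both $z$ and $x + y$, then $\nu_p(x + y) \geq n - 1$.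
   Context: For a prime $p$ and a nonzero integer $m$, $\nu_p(m)$ denotes the exponent of the exact power of $p$ dividing $m$ (the $p$-adic valuation). (The paper phrases (i) as: $p$ is a "Wieferich prime to the base $(a,b)$ of order $r$" when $p\nmid ab$ and $\nu_p(a^{p-1}-b^{p-1}) = r > 1$.) *)

theory Defs
  imports "HOL-Computational_Algebra.Primes"
begin

end

theory Submission
  imports Defs "HOL-Number_Theory.Number_Theory"
begin


lemma fermat_int:
  fixes u :: int and p :: nat
  assumes "prime p" "\<not> int p dvd u"
  shows "int p dvd u ^ (p - 1) - 1"
proof -
  define a where "a = nat (u mod int p)"
  have p0: "int p > 0" using assms(1) prime_gt_0_nat by simp
  have ia: "int a = u mod int p" using p0 unfolding a_def by simp
  have "\<not> p dvd a"
  proof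
    assume "p dvd a"
    then have "int p dvd int a" by simp
    then have "int p dvd u mod int p" using ia by simp
    then show False using assms(2) by (simp add: dvd_mod_iff)
  qed
  then have "[a ^ (p - 1) = 1] (mod p)" using fermat_theorem assms(1) by blast
  then have c1: "[int a ^ (p - 1) = 1] (mod int p)"
    by (metis cong_int_iff of_nat_1 of_nat_power)
  have "[int a = u] (mod int p)" using ia by (simp add: cong_def)
  then have "[int a ^ (p - 1) = u ^ (p - 1)] (mod int p)" by (rule cong_pow)
  then have "[u ^ (p - 1) = 1] (mod int p)" using c1 by (meson cong_sym cong_trans)
  then show ?thesis by (simp add: cong_iff_dvd_diff)
qed

lemma binom_split:
  fixes t b :: int
  shows "(t + b) ^ Suc (Suc (Suc j)) - b ^ Suc (Suc (Suc j)) =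
     t * (of_nat (Suc (Suc (Suc j))) * b ^ Suc (Suc j) + of_nat (Suc (Suc (Suc j)) choose 2) * t * b ^ Suc j
          + t^2 * (\<Sum>k\<le>j. of_nat (Suc (Suc (Suc j)) choose Suc (Suc (Suc k))) * t ^ k * b ^ (j - k)))"
proof -
  define n where "n = Suc (Suc (Suc j))"
  have "(t + b) ^ n = (\<Sum>k\<le>n. of_nat (n choose k) * t^k * b^(n-k))" by (rule binomial_ring)
  also have "\<dots> = b ^ n + of_nat n * t * b ^ Suc (Suc j) + of_nat (n choose 2) * t^2 * b ^ Suc j
     + (\<Sum>k\<le>j. of_nat (n choose Suc (Suc (Suc k))) * t ^ Suc (Suc (Suc k)) * b ^ (j - k))"
    unfolding n_def by (simp only: sum.atMost_Suc_shift) (simp del: sum.atMost_Suc add: numeral_2_eq_2 algebra_simps)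
  also have "(\<Sum>k\<le>j. of_nat (n choose Suc (Suc (Suc k))) * t ^ Suc (Suc (Suc k)) * b ^ (j - k))
     = t^3 * (\<Sum>k\<le>j. of_nat (n choose Suc (Suc (Suc k))) * t ^ k * b ^ (j - k))"
    by (simp add: sum_distrib_left algebra_simps power_Suc numeral_3_eq_3)
  finally show ?thesis unfolding n_def[symmetric]
    by (simp add: algebra_simps power2_eq_square numeral_3_eq_3)
qed

lemma LA:
  fixes a b :: int and p n :: nat
  assumes p: "prime p" and pab: "int p dvd a - b" and pb: "\<not> int p dvd b"
    and n: "prime n" "odd n" and ab: "a \<noteq> b"
  shows "multiplicity (int p) (a ^ n - b ^ n) = multiplicity (int p) (a - b) + (if p = n then 1 else 0)"
proof -
  have "n \<ge> 3" using n prime_ge_2_nat[of n] by (cases "n = 2") auto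
  then obtain j where nj: "n = Suc (Suc (Suc j))" using le_Suc_ex[of 3 n] by (auto simp: numeral_3_eq_3)
  define t where "t = a - b"
  define R :: int where "R = (\<Sum>k\<le>j. of_nat (n choose Suc (Suc (Suc k))) * t ^ k * b ^ (j - k))"
  define Q where "Q = of_nat n * b ^ Suc (Suc j) + of_nat (n choose 2) * t * b ^ Suc j + t^2 * R"
  have aeq: "a = t + b" unfolding t_def by simp
  have eq: "a ^ n - b ^ n = t * Q"
    unfolding aeq Q_def R_def nj by (rule binom_split)
  have pp: "prime (int p)" using p by simp
  have pt: "int p dvd t" using pab t_def by simp
  have t0: "t \<noteq> 0" using ab t_def by simp
  have pbpow: "\<not> int p dvd b ^ Suc (Suc j)" using pb prime_dvd_power pp by blast
  have d1: "int p dvd of_nat (n choose 2) * t * b ^ Suc j + t^2 * R"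
    using pt by (simp add: power2_eq_square)
  have "Q \<noteq> 0 \<and> multiplicity (int p) Q = (if p = n then 1 else 0)"
  proof (cases "p = n")
    case False
    have "\<not> int p dvd int n"
    proof
      assume "int p dvd int n"
      then have "p dvd n" by simp
      then show False using False p n(1) by (simp add: primes_dvd_imp_eq)
    qed
    then have "\<not> int p dvd of_nat n * b ^ Suc (Suc j)"
      using pbpow pp by (simp add: prime_dvd_mult_iff)
    then have "\<not> int p dvd Q" using d1 unfolding Q_def by (metis dvd_add_left_iff add.assoc)
    then show ?thesis using False not_dvd_imp_multiplicity_0 by auto
  next
    case True
    have c2: "int p dvd int (n choose 2)"
    proof -
      have "n choose 2 = n * ((n - 1) div 2)" proof - have "2 dvd n - 1" using n(2) by simp then show ?thesis by (simp add: choose_two div_mult_swap) qed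
      then show ?thesis using True by simp
    qed
    have d2: "(int p)^2 dvd of_nat (n choose 2) * t * b ^ Suc j + t^2 * R"
    proof -
      have "(int p)^2 dvd of_nat (n choose 2) * t" using c2 pt by (simp add: power2_eq_square mult_dvd_mono)
      moreover have "(int p)^2 dvd t^2" using pt by (simp add: power2_eq_square mult_dvd_mono)
      ultimately show ?thesis by (simp add: dvd_mult2)
    qed
    have dQ: "int p ^ 1 dvd Q" using True d1 unfolding Q_def by (metis add.assoc dvd_add dvd_triv_left power_one_right)
    have "\<not> (int p)^2 dvd Q"
    proof
      assume "(int p)^2 dvd Q"
      then have "(int p)^2 dvd int p * b ^ Suc (Suc j)"
        using d2 True unfolding Q_def by (metis dvd_add_left_iff add.assoc)
      then have "int p * int p dvd int p * b ^ Suc (Suc j)" by (simp add: power2_eq_square)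
      then have "int p dvd b ^ Suc (Suc j)" using p by (simp add: prime_gt_0_nat)
      then show False using pbpow by simp
    qed
    moreover then have "multiplicity (int p) Q = 1"
      using dQ by (intro multiplicity_eqI) (auto simp: numeral_2_eq_2)
    ultimately show ?thesis using True by auto
  qed
  then show ?thesis unfolding eq using t0 pp t_def
    by (simp add: prime_elem_multiplicity_mult_distrib)
qed

lemma diff_dvd_pow_diff:
  fixes a b :: int
  shows "a - b dvd a ^ m - b ^ m"
  by (simp add: power_diff_sumr2)

lemma G:
  fixes u v w :: int and p n :: nat
  assumes p: "prime p" and pw: "int p dvd w" and puv: "int p dvd u - v" and pv: "\<not> int p dvd v"
    and wd: "w ^ n dvd u ^ n - v ^ n" and uv: "u ^ n \<noteq> v ^ n" and n: "prime n" "odd n"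
  shows "multiplicity (int p) (u - v) + (if p = n then 1 else 0) \<ge> n"
proof -
  have "u \<noteq> v" using uv by auto
  then have eq: "multiplicity (int p) (u ^ n - v ^ n) = multiplicity (int p) (u - v) + (if p = n then 1 else 0)"
    using LA[OF p puv pv n] by simp
  have "int p ^ n dvd w ^ n" using pw by (rule dvd_power_same)
  then have d: "int p ^ n dvd u ^ n - v ^ n" using wd by (rule dvd_trans)
  have nu: "\<not> is_unit (int p)" proof - have "prime (int p)" using p by simp then show ?thesis using not_prime_unit by blast qed
  have "u ^ n - v ^ n \<noteq> 0" using uv by simp
  from multiplicity_geI[OF this nu d] show ?thesis using eq by simp
qed

lemma H:
  fixes u v w :: int and p n :: nat
  assumes p: "prime p" "odd p" and pw: "int p dvd w" and pu: "\<not> int p dvd u" and pv: "\<not> int p dvd v"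
    and e: "u ^ n - v ^ n = w ^ n" and uv: "u ^ (p - 1) \<noteq> v ^ (p - 1)" and n: "prime n" "odd n"
  shows "multiplicity (int p) (u ^ (p - 1) - v ^ (p - 1)) + (if p = n then 1 else 0) \<ge> n"
proof (rule G[OF p(1) pw _ _ _ _ n])
  have "int p dvd (u ^ (p - 1) - 1) - (v ^ (p - 1) - 1)"
    using fermat_int[OF p(1) pu] fermat_int[OF p(1) pv] by (rule dvd_diff)
  then show "int p dvd u ^ (p - 1) - v ^ (p - 1)" by simp
  have pp: "prime (int p)" using p by simp
  show "\<not> int p dvd v ^ (p - 1)" using pv pp prime_dvd_power by blast
  have "(u ^ (p - 1)) ^ n - (v ^ (p - 1)) ^ n = (u ^ n) ^ (p - 1) - (v ^ n) ^ (p - 1)"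
    by (simp add: power_mult[symmetric] mult.commute)
  moreover have "u ^ n - v ^ n dvd (u ^ n) ^ (p - 1) - (v ^ n) ^ (p - 1)" by (rule diff_dvd_pow_diff)
  ultimately show "w ^ n dvd (u ^ (p - 1)) ^ n - (v ^ (p - 1)) ^ n" using e by simp
  have ev: "even (p - 1)" using p by simp
  have "u ^ (p - 1) \<ge> 0" "v ^ (p - 1) \<ge> 0" using ev by (simp_all add: zero_le_even_power)
  moreover have "n > 0" using n prime_gt_0_nat by blast
  ultimately show "(u ^ (p - 1)) ^ n \<noteq> (v ^ (p - 1)) ^ n" using uv power_eq_imp_eq_base by blast
qed


theorem theorem1p4:
  fixes n :: nat and x y z :: int
  assumes "prime n" and "odd n"
    and "x > 0" and "y > 0" and "z > 0"
    and "gcd x (gcd y z) = 1"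
    and "x ^ n + y ^ n = z ^ n"
  shows
   "(\<forall>p::nat. prime p \<and> odd p \<and> int p dvd x \<longrightarrow>
        multiplicity (int p) (z ^ (p - 1) - y ^ (p - 1)) \<ge> n - 1)
  \<and> (\<forall>p::nat. prime p \<and> odd p \<and> int p dvd y \<longrightarrow>
        multiplicity (int p) (z ^ (p - 1) - x ^ (p - 1)) \<ge> n - 1)
  \<and> (\<forall>p::nat. prime p \<and> odd p \<and> int p dvd z \<longrightarrow>
        x ^ (p - 1) - y ^ (p - 1) = 0 \<or>
        multiplicity (int p) (x ^ (p - 1) - y ^ (p - 1)) \<ge> n - 1)
  \<and> (\<not> int n dvd x * y * z \<longrightarrow>
      (\<forall>p::nat. prime p \<and> odd p \<and> int p dvd x \<longrightarrow>
          multiplicity (int p) (z ^ (p - 1) - y ^ (p - 1)) \<ge> n)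
    \<and> (\<forall>p::nat. prime p \<and> odd p \<and> int p dvd y \<longrightarrow>
          multiplicity (int p) (z ^ (p - 1) - x ^ (p - 1)) \<ge> n)
    \<and> (\<forall>p::nat. prime p \<and> odd p \<and> int p dvd z \<longrightarrow>
          x ^ (p - 1) - y ^ (p - 1) = 0 \<or>
          multiplicity (int p) (x ^ (p - 1) - y ^ (p - 1)) \<ge> n))
  \<and> (2 dvd z \<longrightarrow> multiplicity 2 (x + y) \<ge> n)
  \<and> (2 dvd x \<longrightarrow> multiplicity 2 (z - y) \<ge> n)
  \<and> (2 dvd y \<longrightarrow> multiplicity 2 (z - x) \<ge> n)
  \<and> (\<forall>p::nat. prime p \<and> int p dvd x \<and> int p dvd (z - y) \<longrightarrow>
        multiplicity (int p) (z - y) \<ge> n - 1)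
  \<and> (\<forall>p::nat. prime p \<and> int p dvd y \<and> int p dvd (z - x) \<longrightarrow>
        multiplicity (int p) (z - x) \<ge> n - 1)
  \<and> (\<forall>p::nat. prime p \<and> int p dvd z \<and> int p dvd (x + y) \<longrightarrow>
        multiplicity (int p) (x + y) \<ge> n - 1)"
  proof -
  note n = assms(1,2)
  have n0: "n > 0" using n prime_gt_0_nat by blast
  have dp: "q dvd a ^ n" if "q dvd a" for q a :: int
    using n0 that by (metis dvd_mult2 gr0_conv_Suc power_Suc)
  have nd3: False if "prime (q::int)" "q dvd x" "q dvd y" "q dvd z" for q
  proof -
    have "q dvd gcd x (gcd y z)" using that by simp
    then have "q dvd 1" using assms(6) by simp
    then show False using that(1) not_prime_unit by blast
  qed
  have cxy: False if "prime (q::int)" "q dvd x" "q dvd y" for q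
  proof -
    have "q dvd x ^ n + y ^ n" using that dp by (simp add: dvd_add dvd_diff)
    then have "q dvd z" using assms(7) that(1) prime_dvd_power by metis
    then show False using nd3 that by blast
  qed
  have cxz: False if "prime (q::int)" "q dvd x" "q dvd z" for q
  proof -
    have "q dvd z ^ n - x ^ n" using that dp by (simp add: dvd_add dvd_diff)
    then have "q dvd y ^ n" using assms(7) by (metis add_diff_cancel_left')
    then have "q dvd y" using that(1) prime_dvd_power by metis
    then show False using nd3 that by blast
  qed
  have cyz: False if "prime (q::int)" "q dvd y" "q dvd z" for q
  proof -
    have "q dvd z ^ n - y ^ n" using that dp by (simp add: dvd_add dvd_diff)
    then have "q dvd x ^ n" using assms(7) by (metis add_diff_cancel_right')
    then have "q dvd x" using that(1) prime_dvd_power by metis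
    then show False using nd3 that by blast
  qed
  have ezy: "z ^ n - y ^ n = x ^ n" and ezx: "z ^ n - x ^ n = y ^ n"
    and exy: "x ^ n - (- y) ^ n = z ^ n"
    using assms(7) n(2) by (auto simp: power_minus_odd)
  have "y ^ n < z ^ n" using assms(3,7) by (smt (verit) zero_less_power)
  then have zy: "y < z" using assms(5) power_less_imp_less_base by fastforce
  have "x ^ n < z ^ n" using assms(4,7) by (smt (verit) zero_less_power)
  then have zx: "x < z" using assms(5) power_less_imp_less_base by fastforce
  have mpos: "a ^ (p - 1) \<noteq> b ^ (p - 1)" if "0 < b" "b < a" "prime p" for a b :: int and p :: nat
  proof -
    have "p - 1 \<noteq> 0" using prime_gt_1_nat[OF that(3)] by simp
    then have "b ^ (p - 1) < a ^ (p - 1)" using that by (simp add: power_strict_mono)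
    then show ?thesis by simp
  qed
  have pxX: "multiplicity (int p) (z ^ (p - 1) - y ^ (p - 1)) + (if p = n then 1 else 0) \<ge> n"
    if "prime p" "odd p" "int p dvd x" for p
  proof (rule H[OF that(1,2,3) _ _ ezy mpos[OF _ zy that(1)] n])
    show "\<not> int p dvd z" using cxz[of "int p"] that by auto
    show "\<not> int p dvd y" using cxy[of "int p"] that by auto
  qed (use assms in simp)
  have pyX: "multiplicity (int p) (z ^ (p - 1) - x ^ (p - 1)) + (if p = n then 1 else 0) \<ge> n"
    if "prime p" "odd p" "int p dvd y" for p
  proof (rule H[OF that(1,2,3) _ _ ezx mpos[OF _ zx that(1)] n])
    show "\<not> int p dvd z" using cyz[of "int p"] that by auto
    show "\<not> int p dvd x" using cxy[of "int p"] that by auto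
  qed (use assms in simp)
  have pzX: "x ^ (p - 1) - y ^ (p - 1) = 0 \<or>
      multiplicity (int p) (x ^ (p - 1) - y ^ (p - 1)) + (if p = n then 1 else 0) \<ge> n"
    if "prime p" "odd p" "int p dvd z" for p
  proof (cases "x ^ (p - 1) = y ^ (p - 1)")
    case False
    have "even (p - 1)" using that(2) by simp
    then have ev: "(- y) ^ (p - 1) = y ^ (p - 1)" by (rule power_minus_even)
    have "multiplicity (int p) (x ^ (p - 1) - (- y) ^ (p - 1)) + (if p = n then 1 else 0) \<ge> n"
    proof (rule H[OF that(1,2,3) _ _ exy _ n])
      show "\<not> int p dvd x" using cxz[of "int p"] that by auto
      show "\<not> int p dvd - y" using cyz[of "int p"] that by auto
      show "x ^ (p - 1) \<noteq> (- y) ^ (p - 1)" using False ev by simp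
    qed
    then show ?thesis using ev by simp
  qed simp
  have P1: "\<forall>p::nat. prime p \<and> odd p \<and> int p dvd x \<longrightarrow>
        multiplicity (int p) (z ^ (p - 1) - y ^ (p - 1)) \<ge> n - 1"
  proof (intro allI impI)
    fix p :: nat assume h: "prime p \<and> odd p \<and> int p dvd x"
    then have "multiplicity (int p) (z ^ (p - 1) - y ^ (p - 1)) + (if p = n then 1 else 0) \<ge> n" using pxX[of p] by blast
    then show "multiplicity (int p) (z ^ (p - 1) - y ^ (p - 1)) \<ge> n - 1" by (auto split: if_splits)
  qed
  have P2: "\<forall>p::nat. prime p \<and> odd p \<and> int p dvd y \<longrightarrow>
        multiplicity (int p) (z ^ (p - 1) - x ^ (p - 1)) \<ge> n - 1"
  proof (intro allI impI)
    fix p :: nat assume h: "prime p \<and> odd p \<and> int p dvd y"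
    then have "multiplicity (int p) (z ^ (p - 1) - x ^ (p - 1)) + (if p = n then 1 else 0) \<ge> n" using pyX[of p] by blast
    then show "multiplicity (int p) (z ^ (p - 1) - x ^ (p - 1)) \<ge> n - 1" by (auto split: if_splits)
  qed
  have P3: "\<forall>p::nat. prime p \<and> odd p \<and> int p dvd z \<longrightarrow>
        x ^ (p - 1) - y ^ (p - 1) = 0 \<or>
        multiplicity (int p) (x ^ (p - 1) - y ^ (p - 1)) \<ge> n - 1"
  proof (intro allI impI)
    fix p :: nat assume h: "prime p \<and> odd p \<and> int p dvd z"
    then have "x ^ (p - 1) - y ^ (p - 1) = 0 \<or> multiplicity (int p) (x ^ (p - 1) - y ^ (p - 1)) + (if p = n then 1 else 0) \<ge> n" using pzX[of p] by blast
    then show "x ^ (p - 1) - y ^ (p - 1) = 0 \<or> multiplicity (int p) (x ^ (p - 1) - y ^ (p - 1)) \<ge> n - 1" by (auto split: if_splits)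
  qed
  have P4: "\<not> int n dvd x * y * z \<longrightarrow>
      (\<forall>p::nat. prime p \<and> odd p \<and> int p dvd x \<longrightarrow>
          multiplicity (int p) (z ^ (p - 1) - y ^ (p - 1)) \<ge> n)
    \<and> (\<forall>p::nat. prime p \<and> odd p \<and> int p dvd y \<longrightarrow>
          multiplicity (int p) (z ^ (p - 1) - x ^ (p - 1)) \<ge> n)
    \<and> (\<forall>p::nat. prime p \<and> odd p \<and> int p dvd z \<longrightarrow>
          x ^ (p - 1) - y ^ (p - 1) = 0 \<or>
          multiplicity (int p) (x ^ (p - 1) - y ^ (p - 1)) \<ge> n)"
  proof
    assume nd: "\<not> int n dvd x * y * z"
    have pn: "p \<noteq> n" if "int p dvd x \<or> int p dvd y \<or> int p dvd z" for p :: nat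
    proof
      assume "p = n"
      then have "int n dvd x \<or> int n dvd y \<or> int n dvd z" using that by simp
      then have "int n dvd x * y * z" by (metis dvd_mult dvd_mult2)
      then show False using nd by simp
    qed
    have A: "\<forall>p::nat. prime p \<and> odd p \<and> int p dvd x \<longrightarrow>
          multiplicity (int p) (z ^ (p - 1) - y ^ (p - 1)) \<ge> n"
    proof (intro allI impI)
      fix p :: nat assume h: "prime p \<and> odd p \<and> int p dvd x"
      then have "p \<noteq> n" using pn by blast
      then show "multiplicity (int p) (z ^ (p - 1) - y ^ (p - 1)) \<ge> n" using pxX[of p] h by auto
    qed
    have B: "\<forall>p::nat. prime p \<and> odd p \<and> int p dvd y \<longrightarrow>
          multiplicity (int p) (z ^ (p - 1) - x ^ (p - 1)) \<ge> n"
    proof (intro allI impI)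
      fix p :: nat assume h: "prime p \<and> odd p \<and> int p dvd y"
      then have "p \<noteq> n" using pn by blast
      then show "multiplicity (int p) (z ^ (p - 1) - x ^ (p - 1)) \<ge> n" using pyX[of p] h by auto
    qed
    have C: "\<forall>p::nat. prime p \<and> odd p \<and> int p dvd z \<longrightarrow>
          x ^ (p - 1) - y ^ (p - 1) = 0 \<or>
          multiplicity (int p) (x ^ (p - 1) - y ^ (p - 1)) \<ge> n"
    proof (intro allI impI)
      fix p :: nat assume h: "prime p \<and> odd p \<and> int p dvd z"
      then have "p \<noteq> n" using pn by blast
      then show "x ^ (p - 1) - y ^ (p - 1) = 0 \<or> multiplicity (int p) (x ^ (p - 1) - y ^ (p - 1)) \<ge> n" using pzX[of p] h by auto
    qed
    show "(\<forall>p::nat. prime p \<and> odd p \<and> int p dvd x \<longrightarrow>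
          multiplicity (int p) (z ^ (p - 1) - y ^ (p - 1)) \<ge> n)
    \<and> (\<forall>p::nat. prime p \<and> odd p \<and> int p dvd y \<longrightarrow>
          multiplicity (int p) (z ^ (p - 1) - x ^ (p - 1)) \<ge> n)
    \<and> (\<forall>p::nat. prime p \<and> odd p \<and> int p dvd z \<longrightarrow>
          x ^ (p - 1) - y ^ (p - 1) = 0 \<or>
          multiplicity (int p) (x ^ (p - 1) - y ^ (p - 1)) \<ge> n)" using A B C by blast
  qed
  have zn: "z ^ n \<noteq> 0" "x ^ n \<noteq> 0" "y ^ n \<noteq> 0" using assms(3,4,5) by auto
  have p2: "prime (2::nat)" by simp
  have n2: "2 \<noteq> n" using n(2) by auto
  have i2: "prime (2::int)" by simp
  have P5: "2 dvd z \<longrightarrow> multiplicity 2 (x + y) \<ge> n"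
  proof
    assume h: "2 dvd z"
    have ox: "\<not> 2 dvd x" using cxz[OF i2] h by blast
    have oy: "\<not> 2 dvd y" using cyz[OF i2] h by blast
    have "multiplicity (int 2) (x - - y) + (if 2 = n then 1 else 0) \<ge> n"
    proof (rule G[OF p2 _ _ _ _ _ n])
      show "int 2 dvd z" using h by simp
      show "int 2 dvd x - - y" using ox oy by presburger
      show "\<not> int 2 dvd - y" using oy by simp
      show "z ^ n dvd x ^ n - (- y) ^ n" using exy by simp
      show "x ^ n \<noteq> (- y) ^ n" using exy zn by auto
    qed
    then show "multiplicity 2 (x + y) \<ge> n" using n2 by simp
  qed
  have P6: "2 dvd x \<longrightarrow> multiplicity 2 (z - y) \<ge> n"
  proof
    assume h: "2 dvd x"
    have ox: "\<not> 2 dvd z" using cxz[OF i2] h by blast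
    have oy: "\<not> 2 dvd y" using cxy[OF i2] h by blast
    have "multiplicity (int 2) (z - y) + (if 2 = n then 1 else 0) \<ge> n"
    proof (rule G[OF p2 _ _ _ _ _ n])
      show "int 2 dvd x" using h by simp
      show "int 2 dvd z - y" using ox oy by presburger
      show "\<not> int 2 dvd y" using oy by simp
      show "x ^ n dvd z ^ n - y ^ n" using ezy by simp
      show "z ^ n \<noteq> y ^ n" using ezy zn by auto
    qed
    then show "multiplicity 2 (z - y) \<ge> n" using n2 by simp
  qed
  have P7: "2 dvd y \<longrightarrow> multiplicity 2 (z - x) \<ge> n"
  proof
    assume h: "2 dvd y"
    have ox: "\<not> 2 dvd z" using cyz[OF i2] h by blast
    have oy: "\<not> 2 dvd x" using cxy[OF i2] h by blast
    have "multiplicity (int 2) (z - x) + (if 2 = n then 1 else 0) \<ge> n"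
    proof (rule G[OF p2 _ _ _ _ _ n])
      show "int 2 dvd y" using h by simp
      show "int 2 dvd z - x" using ox oy by presburger
      show "\<not> int 2 dvd x" using oy by simp
      show "y ^ n dvd z ^ n - x ^ n" using ezx by simp
      show "z ^ n \<noteq> x ^ n" using ezx zn by auto
    qed
    then show "multiplicity 2 (z - x) \<ge> n" using n2 by simp
  qed
  have P8: "\<forall>p::nat. prime p \<and> int p dvd x \<and> int p dvd (z - y) \<longrightarrow>
        multiplicity (int p) (z - y) \<ge> n - 1"
  proof (intro allI impI)
    fix p :: nat assume h: "prime p \<and> int p dvd x \<and> int p dvd (z - y)"
    have "multiplicity (int p) (z - y) + (if p = n then 1 else 0) \<ge> n"
    proof (rule G[OF _ _ _ _ _ _ n])
      show "\<not> int p dvd y" using cxy[of "int p"] h by auto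
      show "x ^ n dvd z ^ n - y ^ n" using ezy by simp
      show "z ^ n \<noteq> y ^ n" using ezy zn by auto
    qed (use h in auto)
    then show "multiplicity (int p) (z - y) \<ge> n - 1" by (auto split: if_splits)
  qed
  have P9: "\<forall>p::nat. prime p \<and> int p dvd y \<and> int p dvd (z - x) \<longrightarrow>
        multiplicity (int p) (z - x) \<ge> n - 1"
  proof (intro allI impI)
    fix p :: nat assume h: "prime p \<and> int p dvd y \<and> int p dvd (z - x)"
    have "multiplicity (int p) (z - x) + (if p = n then 1 else 0) \<ge> n"
    proof (rule G[OF _ _ _ _ _ _ n])
      show "\<not> int p dvd x" using cxy[of "int p"] h by auto
      show "y ^ n dvd z ^ n - x ^ n" using ezx by simp
      show "z ^ n \<noteq> x ^ n" using ezx zn by auto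
    qed (use h in auto)
    then show "multiplicity (int p) (z - x) \<ge> n - 1" by (auto split: if_splits)
  qed
  have P10: "\<forall>p::nat. prime p \<and> int p dvd z \<and> int p dvd (x + y) \<longrightarrow>
        multiplicity (int p) (x + y) \<ge> n - 1"
  proof (intro allI impI)
    fix p :: nat assume h: "prime p \<and> int p dvd z \<and> int p dvd (x + y)"
    have "multiplicity (int p) (x - - y) + (if p = n then 1 else 0) \<ge> n"
    proof (rule G[OF _ _ _ _ _ _ n])
      show "\<not> int p dvd - y" using cyz[of "int p"] h by auto
      show "z ^ n dvd x ^ n - (- y) ^ n" using exy by simp
      show "x ^ n \<noteq> (- y) ^ n" using exy zn by auto
    qed (use h in auto)
    then show "multiplicity (int p) (x + y) \<ge> n - 1" by (auto split: if_splits)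
  qed
  show ?thesis using P1 P2 P3 P4 P5 P6 P7 P8 P9 P10 by blast
qed

end
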